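(* Let $\alpha,\beta,r,x$ be real numbers and $\lambda$ a positive integer. For all nonnegative integers $n$, $$A_{n}^{\lambda,x}(\alpha,\beta,r)=\frac{(-1)^{n}}{\Gamma(\lambda)}\int_{0}^{\infty}z^{\lambda-1}S_{n}(-\beta xz;\alpha,-\beta,-r)\,e^{-z}\,dz,$$ where $\Gamma$ is the gamma function.
   Context: For a number $t$ and $\alpha$, the generalised factorial is $(t|\alpha)_n=\prod_{j=0}^{n-1}(t-j\alpha)$ for $n\ge 1$ and $(t|\alpha)_0=1$. For parameters $\alpha,\beta,\gamma$, the generalised Stirling numbers $S(n,k,\alpha,\beta,\gamma)$ ($0\le k\le n$) are defined by the polynomial identity $(t|\alpha)_n=\sum_{k=0}^{n}S(n,k,\alpha,\beta,\gamma)\,(t-\gamma|\beta)_k$ in the variable $t$. The generalised exponential polynomials are $S_n(y;\alpha,\beta,r)=\sum_{k=0}^{n}S(n,k,\alpha,\beta,r)\,y^k$. For a nonnegative integer $\lambda$ put $\binom{k+\lambda-1}{k}=\lambda(\lambda+1)\cdots(\lambda+k-1)/k!$ (equal to $1$ for $k=0$). Define $$A^{\lambda,x}_n(\alpha,\beta,\gamma)=\sum_{k=0}^{n}\binom{k+\lambda-1}{k}(-1)^{n+k}\beta^k k!\,S(n,k,\alpha,-\beta,-\gamma)\,x^k .$$ *)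

theory Defs
  imports "HOL-Analysis.Analysis"
begin

definition gen_fact :: "real \<Rightarrow> real \<Rightarrow> nat \<Rightarrow> real" where
  "gen_fact t a n = (\<Prod>j<n. (t - real j * a))"

definition gen_stirling :: "nat \<Rightarrow> nat \<Rightarrow> real \<Rightarrow> real \<Rightarrow> real \<Rightarrow> real" where
  "gen_stirling n k a b g =
     (THE c. (\<forall>t. gen_fact t a n = (\<Sum>i=0..n. c i * gen_fact (t - g) b i))
             \<and> (\<forall>i>n. c i = 0)) k"

definition gen_exp_poly :: "nat \<Rightarrow> real \<Rightarrow> real \<Rightarrow> real \<Rightarrow> real \<Rightarrow> real" where
  "gen_exp_poly n y a b r = (\<Sum>k=0..n. gen_stirling n k a b r * y ^ k)"

text \<open>A^{lambda,x}_n(alpha,beta,gamma); binom(k+lambda-1,k) = lambda(lambda+1)...(lambda+k-1)/k!.\<close>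
definition A_poly :: "nat \<Rightarrow> nat \<Rightarrow> real \<Rightarrow> real \<Rightarrow> real \<Rightarrow> real \<Rightarrow> real" where
  "A_poly n lam x a b g =
     (\<Sum>k=0..n. (pochhammer (real lam) k / fact k) * (-1) ^ (n + k) * b ^ k * fact k
                 * gen_stirling n k a (-b) (-g) * x ^ k)"

end

theory Submission
  imports Defs "HOL-Probability.Sinc_Integral"
begin

lemma int_aux:
  fixes d :: "nat \<Rightarrow> real" and m n :: nat
  shows "has_bochner_integral lborel
     (\<lambda>z. indicator {0..} z *\<^sub>R (\<Sum>k=0..n. d k * (z ^ (m + k) * exp (- z))))
     (\<Sum>k=0..n. d k * fact (m + k))"
proof -
  have "has_bochner_integral lborel
     (\<lambda>z. \<Sum>k\<in>{0..n}. d k * (z ^ (m + k) * exp (- z) * indicator {0..} z))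
     (\<Sum>k\<in>{0..n}. d k * fact (m + k))"
    by (intro has_bochner_integral_sum has_bochner_integral_mult_right
        has_bochner_integral_I0i_power_exp_m')
  then show ?thesis
    by (simp add: sum_distrib_left sum_distrib_right mult_ac split: split_indicator)
qed

theorem lemma3:
  fixes a b r x :: real and lam n :: nat
  assumes "lam > 0"
  shows "A_poly n lam x a b r =
    (-1) ^ n / Gamma (real lam) *
    (LINT z:{0..}|lborel. z ^ (lam - 1) * gen_exp_poly n (- b * x * z) a (- b) (- r) * exp (- z))"
proof -
  define c where "c k = gen_stirling n k a (- b) (- r)" for k
  define d where "d k = c k * (- b * x) ^ k" for k
  obtain m where m: "lam = Suc m" using assms by (cases lam) auto
  have eq: "(\<lambda>z. indicator {0..} z *\<^sub>R (z ^ (lam - 1) * gen_exp_poly n (- b * x * z) a (- b) (- r) * exp (- z)))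
     = (\<lambda>z. indicator {0..} z *\<^sub>R (\<Sum>k=0..n. d k * (z ^ (m + k) * exp (- z))))"
  proof
    fix z :: real
    have "z ^ (lam - 1) * gen_exp_poly n (- b * x * z) a (- b) (- r) * exp (- z)
        = (\<Sum>k=0..n. d k * (z ^ (m + k) * exp (- z)))"
      unfolding gen_exp_poly_def sum_distrib_left sum_distrib_right
    proof (intro sum.cong refl)
      fix k
      have e: "(- b * x * z) ^ k = (- b * x) ^ k * z ^ k"
        by (simp only: power_mult_distrib[symmetric])
      show "z ^ (lam - 1) * (gen_stirling n k a (- b) (- r) * (- b * x * z) ^ k) * exp (- z)
          = d k * (z ^ (m + k) * exp (- z))"
        unfolding e by (simp add: m d_def c_def power_add mult_ac)
    qed
    then show "indicator {0..} z *\<^sub>R (z ^ (lam - 1) * gen_exp_poly n (- b * x * z) a (- b) (- r) * exp (- z))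
     = indicator {0..} z *\<^sub>R (\<Sum>k=0..n. d k * (z ^ (m + k) * exp (- z)))" by simp
  qed
  have I: "(LINT z:{0..}|lborel. z ^ (lam - 1) * gen_exp_poly n (- b * x * z) a (- b) (- r) * exp (- z))
      = (\<Sum>k=0..n. d k * fact (m + k))"
    unfolding set_lebesgue_integral_def eq
    using int_aux has_bochner_integral_integral_eq by blast
  have G: "Gamma (real lam) = fact m"
    using Gamma_fact[of m] by (simp add: m)
  have P: "pochhammer (real lam) k = fact (m + k) / fact m" for k
  proof -
    have "real lam \<notin> \<int>\<^sub>\<le>\<^sub>0" using assms by (auto elim!: nonpos_Ints_cases)
    then have "pochhammer (real lam) k = Gamma (real lam + real k) / Gamma (real lam)"
      by (rule pochhammer_Gamma)
    also have "real lam + real k = real (Suc (m + k))" by (simp add: m)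
    finally show ?thesis using Gamma_fact[of "m+k"] G by simp
  qed
  show ?thesis
    unfolding I A_poly_def G sum_distrib_left
  proof (intro sum.cong refl)
    fix k assume "k \<in> {0..n}"
    show "pochhammer (real lam) k / fact k * (- 1) ^ (n + k) * b ^ k * fact k *
        gen_stirling n k a (- b) (- r) * x ^ k = (- 1) ^ n / fact m * (d k * fact (m + k))"
      (is ?thesis')
    proof -
      have e: "(- b * x) ^ k = (-1) ^ k * b ^ k * x ^ k"
        by (metis mult_minus1 power_mult_distrib mult.assoc)
      show ?thesis'
        unfolding d_def c_def e P power_add by (simp add: field_simps)
    qed
  qed
qed

end
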